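(* Let $(\rho_t)_{t\ge0}$ be a gradient flow solution of the Granular-Medium equation. For any $x,y\in\mathbb{T}^d$ and $t,h>0$, with $B=|\nabla V|_2+|\nabla W|_2$, \[D_\rho(x,y;t,h)\le\left(\frac{d(x,y)}{2\sqrt h}+\frac12\sqrt h\,B\right)^2.\]
   Context: $\mathbb{T}^d=\mathbb{R}^d/\mathbb{Z}^d$ with flat distance $d(x,y)$. $V,W\in C^{2,1}(\mathbb{T}^d)$; for a vector field $U$, $|U|_2=\sup_x|U(x)|$ (Euclidean norm). $W*\rho(x)=\int W(x-y)d\rho(y)$. The Granular-Medium equation is $\partial_t\rho_t=\Delta\rho_t+\nabla\cdot(\rho_t\nabla V+\rho_t\nabla W*\rho_t)$, and gradient flow solutions are Ambrosio–Gigli–Savaré gradient flows of $\mathcal{F}[\rho]=\int\rho\log\rho+\int Vd\rho+\int W*\rho\,d\rho$ in $(\mathcal{P}(\mathbb{T}^d),W_2)$. Lagrangian: $\mathcal{L}_\rho(p,x,t)=\frac14|p+\nabla V(x)+\nabla W*\rho_t(x)|^2$; cost $D_\rho(x,y;t,h)=\inf\{\int_t^{t+h}\mathcal{L}_\rho(\dot\gamma_s,\gamma_s,s)ds:\gamma\in AC_2([t,t+h];\mathbb{T}^d),\gamma_t=x,\gamma_{t+h}=y\}$. *)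

theory Defs
  imports "HOL-Probability.Probability"
begin

text \<open>Points of T^d are represented by points of R^d = real^'n (d = CARD('n));
  functions on T^d are Z^d-periodic functions on R^d; measures on T^d are Borel
  probability measures on R^d concentrated on the fundamental cube [0,1)^d.\<close>

definition int_vec :: "real^'n \<Rightarrow> bool" where
  "int_vec k \<longleftrightarrow> (\<forall>i. k $ i \<in> \<int>)"

definition periodic :: "(real^'n \<Rightarrow> 'a) \<Rightarrow> bool" where
  "periodic f \<longleftrightarrow> (\<forall>x k. int_vec k \<longrightarrow> f (x + k) = f x)"

definition unit_cube :: "(real^'n) set" where
  "unit_cube = {x. \<forall>i. 0 \<le> x $ i \<and> x $ i < 1}"

definition torus_dist :: "real^'n \<Rightarrow> real^'n \<Rightarrow> real" where
  "torus_dist x y = Inf ((\<lambda>k. norm (x - y - k)) ` {k. int_vec k})"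

definition C21 :: "(real^'n \<Rightarrow> real) \<Rightarrow> (real^'n \<Rightarrow> real^'n) \<Rightarrow> bool" where
  "C21 f gradf \<longleftrightarrow>
     (\<forall>x. (f has_derivative (\<lambda>v. gradf x \<bullet> v)) (at x)) \<and>
     (\<exists>H. (\<forall>x. (gradf has_derivative H x) (at x)) \<and>
          (\<exists>L. \<forall>x y. onorm (\<lambda>v. H x v - H y v) \<le> L * dist x y))"

definition sup_norm :: "(real^'n \<Rightarrow> real^'n) \<Rightarrow> real" where
  "sup_norm U = Sup (range (\<lambda>x. norm (U x)))"

definition prob_torus :: "(real^'n) measure set" where
  "prob_torus = {\<mu>. prob_space \<mu> \<and> sets \<mu> = sets borel \<and> emeasure \<mu> unit_cube = 1}"

definition couplings :: "(real^'n) measure \<Rightarrow> (real^'n) measure \<Rightarrow> ((real^'n) \<times> (real^'n)) measure set" where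
  "couplings \<mu> \<nu> = {\<pi>. prob_space \<pi> \<and> sets \<pi> = sets borel \<and>
                      distr \<pi> borel fst = \<mu> \<and> distr \<pi> borel snd = \<nu>}"

definition W2 :: "(real^'n) measure \<Rightarrow> (real^'n) measure \<Rightarrow> real" where
  "W2 \<mu> \<nu> = sqrt (Inf ((\<lambda>\<pi>. \<integral>z. (torus_dist (fst z) (snd z))\<^sup>2 \<partial>\<pi>) ` couplings \<mu> \<nu>))"

definition has_density :: "(real^'n) measure \<Rightarrow> (real^'n \<Rightarrow> real) \<Rightarrow> bool" where
  "has_density \<mu> f \<longleftrightarrow> f \<in> borel_measurable borel \<and> (\<forall>x. 0 \<le> f x) \<and>
                         \<mu> = density lborel (\<lambda>x. ennreal (f x))"

text \<open>Since \<rho> log \<rho> \<ge> -1/e and the cube has volume 1, we integrate the nonnegative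
  function \<rho> log \<rho> + 1/e over the cube and subtract 1/e.\<close>
definition entropy :: "(real^'n) measure \<Rightarrow> ereal" where
  "entropy \<mu> = (if \<exists>f. has_density \<mu> f then
      (let f = (SOME f. has_density \<mu> f) in
        enn2ereal (\<integral>\<^sup>+x. ennreal (f x * ln (f x) + exp (-1) * indicator unit_cube x) \<partial>lborel)
        - ereal (exp (-1)))
     else \<infinity>)"

definition free_energy :: "(real^'n \<Rightarrow> real) \<Rightarrow> (real^'n \<Rightarrow> real) \<Rightarrow> (real^'n) measure \<Rightarrow> ereal" where
  "free_energy V W \<mu> = entropy \<mu> +
     ereal ((\<integral>x. V x \<partial>\<mu>) + (\<integral>x. (\<integral>y. W (x - y) \<partial>\<mu>) \<partial>\<mu>))"

definition local_slope :: "((real^'n) measure \<Rightarrow> ereal) \<Rightarrow> (real^'n) measure \<Rightarrow> ereal" where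
  "local_slope F \<mu> = (if \<bar>F \<mu>\<bar> = \<infinity> then \<infinity> else
     (INF r\<in>{0<..}. SUP \<nu>\<in>{\<nu>\<in>prob_torus. 0 < W2 \<mu> \<nu> \<and> W2 \<mu> \<nu> < r}.
        max 0 ((F \<mu> - F \<nu>) / ereal (W2 \<mu> \<nu>))))"

definition loc_AC_curve :: "(real \<Rightarrow> (real^'n) measure) \<Rightarrow> bool" where
  "loc_AC_curve \<rho> \<longleftrightarrow>
     (\<exists>m::real \<Rightarrow> real. (\<forall>a b. 0 < a \<longrightarrow> m integrable_on {a..b}) \<and>
        (\<forall>s t. 0 < s \<longrightarrow> s \<le> t \<longrightarrow> W2 (\<rho> s) (\<rho> t) \<le> integral {s..t} m)) \<and>
     ((\<lambda>t. W2 (\<rho> t) (\<rho> 0)) \<longlongrightarrow> 0) (at_right 0)"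

definition metric_derivative :: "(real \<Rightarrow> (real^'n) measure) \<Rightarrow> real \<Rightarrow> real" where
  "metric_derivative \<rho> t = Lim (at t) (\<lambda>s. W2 (\<rho> s) (\<rho> t) / \<bar>s - t\<bar>)"

text \<open>Gradient flow in the sense of Ambrosio--Gigli--Savar\'e: a curve of maximal
  slope of F with respect to its local slope (AGS Def. 1.3.2) in (P(T^d), W2).\<close>
definition gradient_flow :: "((real^'n) measure \<Rightarrow> ereal) \<Rightarrow> (real \<Rightarrow> (real^'n) measure) \<Rightarrow> bool" where
  "gradient_flow F \<rho> \<longleftrightarrow>
     (\<forall>t\<ge>0. \<rho> t \<in> prob_torus) \<and> loc_AC_curve \<rho> \<and>
     (\<exists>\<phi>::real \<Rightarrow> real. (\<forall>s t. 0 < s \<longrightarrow> s \<le> t \<longrightarrow> \<phi> t \<le> \<phi> s) \<and>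
        (AE t in lborel. 0 < t \<longrightarrow> F (\<rho> t) = ereal (\<phi> t)) \<and>
        (AE t in lborel. 0 < t \<longrightarrow>
           (\<exists>D. (\<phi> has_real_derivative D) (at t) \<and>
                ereal D \<le> - ereal ((metric_derivative \<rho> t)\<^sup>2 / 2)
                          - local_slope F (\<rho> t) * local_slope F (\<rho> t) / 2)))"

definition granular_gradient_flow ::
  "(real^'n \<Rightarrow> real) \<Rightarrow> (real^'n \<Rightarrow> real) \<Rightarrow> (real \<Rightarrow> (real^'n) measure) \<Rightarrow> bool" where
  "granular_gradient_flow V W \<rho> \<longleftrightarrow> gradient_flow (free_energy V W) \<rho>"

definition conv_grad :: "(real^'n \<Rightarrow> real^'n) \<Rightarrow> (real^'n) measure \<Rightarrow> real^'n \<Rightarrow> real^'n" where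
  "conv_grad gW \<mu> x = (\<integral>y. gW (x - y) \<partial>\<mu>)"

definition lagrangian ::
  "(real^'n \<Rightarrow> real^'n) \<Rightarrow> (real^'n \<Rightarrow> real^'n) \<Rightarrow> (real \<Rightarrow> (real^'n) measure)
   \<Rightarrow> real^'n \<Rightarrow> real^'n \<Rightarrow> real \<Rightarrow> real" where
  "lagrangian gV gW \<rho> p x t = (1/4) * (norm (p + gV x + conv_grad gW (\<rho> t) x))\<^sup>2"

definition AC2_curve :: "real \<Rightarrow> real \<Rightarrow> (real \<Rightarrow> real^'n) \<Rightarrow> (real \<Rightarrow> real^'n) \<Rightarrow> bool" where
  "AC2_curve a b \<gamma> \<gamma>' \<longleftrightarrow>
     \<gamma>' absolutely_integrable_on {a..b} \<and>
     (\<lambda>s. (norm (\<gamma>' s))\<^sup>2) integrable_on {a..b} \<and>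
     (\<forall>s\<in>{a..b}. \<gamma> s = \<gamma> a + integral {a..s} \<gamma>')"

text \<open>D_\<rho>(x,y;t,h): curves from x to (a lift of) y, i.e. \<gamma>(t+h) - y \<in> Z^d.\<close>
definition cost ::
  "(real^'n \<Rightarrow> real^'n) \<Rightarrow> (real^'n \<Rightarrow> real^'n) \<Rightarrow> (real \<Rightarrow> (real^'n) measure)
   \<Rightarrow> real^'n \<Rightarrow> real^'n \<Rightarrow> real \<Rightarrow> real \<Rightarrow> real" where
  "cost gV gW \<rho> x y t h = Inf {integral {t..t+h} (\<lambda>s. lagrangian gV gW \<rho> (\<gamma>' s) (\<gamma> s) s) | \<gamma> \<gamma>'.
       AC2_curve t (t+h) \<gamma> \<gamma>' \<and> \<gamma> t = x \<and> int_vec (\<gamma> (t+h) - y) \<and>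
       (\<lambda>s. lagrangian gV gW \<rho> (\<gamma>' s) (\<gamma> s) s) integrable_on {t..t+h}}"

end

theory Submission
  imports Defs
begin

lemma int_vec_uminus: "int_vec k \<Longrightarrow> int_vec (- k)"
  unfolding int_vec_def by auto

lemma int_vec_zero: "int_vec 0"
  unfolding int_vec_def by auto

lemma deriv_periodic:
  fixes f :: "real^'n \<Rightarrow> 'b::real_normed_vector"
  assumes p: "periodic f" and d: "\<And>x. (f has_derivative D x) (at x)" and k: "int_vec k"
  shows "D (x + k) = D x"
proof -
  have t: "((\<lambda>z. z + k) has_derivative (\<lambda>h. h)) (at x)"
    by (auto intro!: derivative_eq_intros)
  have "((\<lambda>z. f (z + k)) has_derivative (\<lambda>h. D (x + k) h)) (at x)"
    using has_derivative_compose[OF t d[of "x + k"]] by simp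
  moreover have "(\<lambda>z. f (z + k)) = f" using p k unfolding periodic_def by auto
  ultimately have "(f has_derivative D (x + k)) (at x)" by simp
  then show ?thesis using d[of x] by (rule has_derivative_unique)
qed

lemma grad_periodic:
  fixes f :: "real^'n \<Rightarrow> real"
  assumes p: "periodic f" and d: "\<And>x. (f has_derivative (\<lambda>v. g x \<bullet> v)) (at x)"
  shows "periodic g"
  unfolding periodic_def
proof (intro allI impI)
  fix x k :: "real^'n" assume k: "int_vec k"
  have "(\<lambda>v. g (x + k) \<bullet> v) = (\<lambda>v. g x \<bullet> v)"
    using deriv_periodic[where D="\<lambda>x v. g x \<bullet> v", OF p d k] .
  then have "g (x + k) \<bullet> (g (x + k) - g x) = g x \<bullet> (g (x + k) - g x)" by metis
  then have "(g (x + k) - g x) \<bullet> (g (x + k) - g x) = 0" by (simp add: inner_diff_left)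
  then show "g (x + k) = g x" by simp
qed

lemma reduce_cube:
  fixes x :: "real^'n"
  shows "\<exists>k. int_vec k \<and> x - k \<in> cbox 0 1"
proof -
  define k :: "real^'n" where "k = (\<chi> i. of_int \<lfloor>x $ i\<rfloor>)"
  have "int_vec k" unfolding int_vec_def k_def by auto
  moreover have "x - k \<in> cbox 0 1"
    unfolding mem_box_cart k_def
    by (auto simp: of_int_floor_le) (smt (verit) real_of_int_floor_add_one_gt)
  ultimately show ?thesis by blast
qed

lemma periodic_bounded:
  fixes f :: "real^'n \<Rightarrow> 'b::real_normed_vector"
  assumes p: "periodic f" and c: "continuous_on UNIV f"
  shows "\<exists>M. \<forall>x. norm (f x) \<le> M"
proof -
  have "compact (f ` cbox 0 1)"
    by (rule compact_continuous_image) (use c continuous_on_subset in auto)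
  then obtain M where M: "\<forall>y\<in>f ` cbox 0 1. norm y \<le> M"
    using compact_imp_bounded bounded_iff by metis
  have "norm (f x) \<le> M" for x
  proof -
    obtain k where k: "int_vec k" "x - k \<in> cbox 0 1" using reduce_cube by blast
    have "f x = f ((x - k) + k)" by simp
    also have "\<dots> = f (x - k)" using p k unfolding periodic_def by blast
    finally show ?thesis using M k by auto
  qed
  then show ?thesis by blast
qed

lemma cube_bounded: "\<exists>R. \<forall>z::real^'n. z \<in> cbox 0 1 \<longrightarrow> norm z \<le> R"
  using bounded_cbox[of "0::real^'n" 1] bounded_iff by metis


lemma grad_lipschitz:
  fixes W :: "real^'n \<Rightarrow> real"
  assumes pW: "periodic W" and c: "C21 W gW"
  shows "\<exists>K>0. \<forall>u v. norm (gW u - gW v) \<le> K * norm (u - v)"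
proof -
  have dW: "\<And>x. (W has_derivative (\<lambda>v. gW x \<bullet> v)) (at x)" using c unfolding C21_def by blast
  obtain H L where dH: "\<And>x. (gW has_derivative H x) (at x)"
    and HL: "\<And>x y. onorm (\<lambda>v. H x v - H y v) \<le> L * dist x y"
    using c unfolding C21_def by blast
  have pg: "periodic gW" by (rule grad_periodic[OF pW dW])
  have bl: "\<And>x. bounded_linear (H x)" using dH has_derivative_bounded_linear by blast
  obtain R where R: "\<And>z::real^'n. z \<in> cbox 0 1 \<Longrightarrow> norm z \<le> R" using cube_bounded by blast
  have R0: "0 \<le> R" using R[of 0] by (auto simp: mem_box_cart)
  define B where "B = onorm (H 0) + \<bar>L\<bar> * R"
  have B0: "0 \<le> B" unfolding B_def using onorm_pos_le[OF bl[of 0]] R0 by simp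
  have Hb: "onorm (H x) \<le> B" for x
  proof -
    obtain k where k: "int_vec k" "x - k \<in> cbox 0 1" using reduce_cube by blast
    have "H x = H ((x - k) + k)" by simp
    also have "\<dots> = H (x - k)" by (rule deriv_periodic[OF pg dH k(1)])
    finally have eq: "H x = H (x - k)" .
    have bl2: "bounded_linear (\<lambda>v. H (x - k) v - H 0 v)"
      using bl[of "x-k"] bl[of 0] by (intro bounded_linear_sub) auto
    have "onorm (H (x - k)) = onorm (\<lambda>v. H 0 v + (H (x - k) v - H 0 v))" by simp
    also have "\<dots> \<le> onorm (H 0) + onorm (\<lambda>v. H (x - k) v - H 0 v)"
      by (rule onorm_triangle[OF bl[of 0] bl2])
    also have "\<dots> \<le> onorm (H 0) + L * dist (x - k) 0" using HL[of "x - k" 0] by simp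
    also have "L * dist (x - k) 0 \<le> \<bar>L\<bar> * R"
    proof -
      have "L * dist (x - k) 0 \<le> \<bar>L\<bar> * dist (x - k) 0"
        by (intro mult_right_mono) auto
      also have "\<dots> \<le> \<bar>L\<bar> * R" using R[OF k(2)] by (intro mult_left_mono) auto
      finally show ?thesis .
    qed
    finally show ?thesis unfolding eq B_def by simp
  qed
  have "norm (gW u - gW v) \<le> B * norm (u - v)" for u v
    by (rule differentiable_bound[where S=UNIV and f'=H]) (use dH Hb in auto)
  then have "\<forall>u v. norm (gW u - gW v) \<le> (B + 1) * norm (u - v)"
    by (metis add.commute le_add_same_cancel2 mult_right_mono norm_ge_zero order_trans zero_le_one)
  then show ?thesis using B0 by (intro exI[of _ "B+1"]) auto
qed

lemma td_nonneg: "0 \<le> torus_dist x y"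
  unfolding torus_dist_def
  by (rule cInf_greatest) (use int_vec_zero in auto)

lemma td_le: "int_vec k \<Longrightarrow> torus_dist x y \<le> norm (x - y - k)"
  unfolding torus_dist_def
  by (rule cInf_lower) (auto intro!: bdd_belowI[of _ 0])

lemma td_approx:
  assumes "e > 0" shows "\<exists>k. int_vec k \<and> norm (x - y - k) < torus_dist x y + e"
proof -
  have "(\<lambda>k. norm (x - y - k)) ` {k. int_vec k} \<noteq> {}" using int_vec_zero by auto
  from cInf_lessD[OF this, of "torus_dist x y + e"] assms
  show ?thesis unfolding torus_dist_def by auto
qed

lemma td_bound: "\<exists>R. \<forall>x y::real^'n. torus_dist x y \<le> R"
proof -
  obtain R where R: "\<And>z::real^'n. z \<in> cbox 0 1 \<Longrightarrow> norm z \<le> R" using cube_bounded by blast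
  have "torus_dist x y \<le> R" for x y :: "real^'n"
  proof -
    obtain k where k: "int_vec k" "x - y - k \<in> cbox 0 1" using reduce_cube by blast
    show ?thesis using td_le[OF k(1), of x y] R[OF k(2)] by simp
  qed
  then show ?thesis by blast
qed

lemma td_lip: "torus_dist a b \<le> torus_dist a' b' + norm (a - a') + norm (b - b')"
proof -
  have "torus_dist a b - norm (a - a') - norm (b - b') \<le> torus_dist a' b'"
    unfolding torus_dist_def[of a' b']
  proof (rule cInf_greatest)
    show "(\<lambda>k. norm (a' - b' - k)) ` {k. int_vec k} \<noteq> {}" using int_vec_zero by auto
  next
    fix m assume "m \<in> (\<lambda>k. norm (a' - b' - k)) ` {k. int_vec k}"
    then obtain k where k: "int_vec k" "m = norm (a' - b' - k)" by auto
    have "torus_dist a b \<le> norm (a - b - k)" by (rule td_le[OF k(1)])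
    also have "\<dots> \<le> norm (a' - b' - k) + norm (a - a') + norm (b - b')"
      using norm_triangle_ineq[of "a' - b' - k" "a - a'"] norm_triangle_ineq[of "a' - b' - k + (a - a')" "b' - b"]
      by (simp add: algebra_simps norm_minus_commute)
    finally show "torus_dist a b - norm (a - a') - norm (b - b') \<le> m" using k by simp
  qed
  then show ?thesis by simp
qed

lemma td_cont: "continuous_on UNIV (\<lambda>p::(real^'n)\<times>(real^'n). torus_dist (fst p) (snd p))"
  unfolding continuous_on_iff
proof (intro ballI allI impI)
  fix p :: "(real^'n)\<times>(real^'n)" and e :: real assume e: "0 < e"
  show "\<exists>d>0. \<forall>p'\<in>UNIV. dist p' p < d \<longrightarrow> dist (torus_dist (fst p') (snd p')) (torus_dist (fst p) (snd p)) < e"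
  proof (intro exI[of _ "e/2"] conjI ballI impI)
    fix p' assume d: "dist p' p < e / 2"
    have a: "norm (fst p' - fst p) < e/2" using dist_fst_le[of p' p] d by (simp add: dist_norm)
    have b: "norm (snd p' - snd p) < e/2" using dist_snd_le[of p' p] d by (simp add: dist_norm)
    have "torus_dist (fst p') (snd p') \<le> torus_dist (fst p) (snd p) + norm (fst p' - fst p) + norm (snd p' - snd p)"
      by (rule td_lip)
    moreover have "torus_dist (fst p) (snd p) \<le> torus_dist (fst p') (snd p') + norm (fst p - fst p') + norm (snd p - snd p')"
      by (rule td_lip)
    ultimately show "dist (torus_dist (fst p') (snd p')) (torus_dist (fst p) (snd p)) < e"
      using a b by (simp add: dist_real_def norm_minus_commute abs_le_iff)
  qed (use e in simp)
qed


lemma couplings_nonempty: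
  fixes \<mu> \<nu> :: "(real^'n) measure"
  assumes m: "\<mu> \<in> prob_torus" and n: "\<nu> \<in> prob_torus"
  shows "\<mu> \<Otimes>\<^sub>M \<nu> \<in> couplings \<mu> \<nu>"
proof -
  have pm: "prob_space \<mu>" and sm: "sets \<mu> = sets borel" using m unfolding prob_torus_def by auto
  have pn: "prob_space \<nu>" and sn: "sets \<nu> = sets borel" using n unfolding prob_torus_def by auto
  have sets: "sets (\<mu> \<Otimes>\<^sub>M \<nu>) = sets (borel :: ((real^'n)\<times>(real^'n)) measure)"
    using sets_pair_measure_cong[OF sm sn] borel_prod by metis
  have d1: "distr (\<mu> \<Otimes>\<^sub>M \<nu>) borel fst = \<mu>"
  proof -
    have "distr (\<mu> \<Otimes>\<^sub>M \<nu>) borel fst = distr (\<mu> \<Otimes>\<^sub>M \<nu>) \<mu> fst"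
      by (rule distr_cong) (use sm in auto)
    also have "\<dots> = \<mu>" by (rule prob_space.distr_pair_fst[OF pn])
    finally show ?thesis .
  qed
  have d2: "distr (\<mu> \<Otimes>\<^sub>M \<nu>) borel snd = \<nu>"
  proof -
    interpret sn: prob_space \<nu> by (rule pn)
    interpret sm: prob_space \<mu> by (rule pm)
    have "distr (\<mu> \<Otimes>\<^sub>M \<nu>) borel snd = distr (\<mu> \<Otimes>\<^sub>M \<nu>) \<nu> snd"
      by (rule distr_cong) (use sn in auto)
    also have "\<dots> = \<nu>"
    proof (intro measure_eqI)
      fix A assume A: "A \<in> sets (distr (\<mu> \<Otimes>\<^sub>M \<nu>) \<nu> snd)"
      from A have "emeasure (distr (\<mu> \<Otimes>\<^sub>M \<nu>) \<nu> snd) A = emeasure (\<mu> \<Otimes>\<^sub>M \<nu>) (space \<mu> \<times> A)"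
        by (auto simp add: emeasure_distr space_pair_measure dest: sets.sets_into_space intro!: arg_cong2[where f=emeasure])
      with A show "emeasure (distr (\<mu> \<Otimes>\<^sub>M \<nu>) \<nu> snd) A = emeasure \<nu> A"
        by (simp add: sn.emeasure_pair_measure_Times sm.emeasure_space_1)
    qed simp
    finally show ?thesis .
  qed
  show ?thesis unfolding couplings_def
    using prob_space_pair[OF pm pn] sets d1 d2 by auto
qed

lemma mean_le_sqrt:
  fixes X :: "'a \<Rightarrow> real"
  assumes "prob_space M" "integrable M X" "integrable M (\<lambda>x. (X x)\<^sup>2)"
  shows "(\<integral>x. X x \<partial>M) \<le> sqrt (\<integral>x. (X x)\<^sup>2 \<partial>M)"
proof -
  interpret prob_space M by fact
  have "(\<integral>x. X x \<partial>M)\<^sup>2 \<le> (\<integral>x. (X x)\<^sup>2 \<partial>M)"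
    using variance_eq[OF assms(2,3)] variance_positive[of X] by simp
  then show ?thesis using real_le_rsqrt by blast
qed


lemma pw_bound:
  fixes gW :: "real^'n \<Rightarrow> real^'n"
  assumes per: "periodic gW" and lip: "\<And>u v. norm (gW u - gW v) \<le> K * norm (u - v)" and K: "K > 0"
  shows "norm (gW (z - a) - gW (z' - b)) \<le> K * norm (z - z') + K * torus_dist a b"
proof -
  have "norm (gW (z - a) - gW (z' - b)) / K - norm (z - z') \<le> torus_dist a b"
    unfolding torus_dist_def
  proof (rule cInf_greatest)
    show "(\<lambda>k. norm (a - b - k)) ` {k. int_vec k} \<noteq> {}" using int_vec_zero by auto
  next
    fix m assume "m \<in> (\<lambda>k. norm (a - b - k)) ` {k. int_vec k}"
    then obtain k where k: "int_vec k" "m = norm (a - b - k)" by auto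
    have "gW (z' - b) = gW ((z' - b) + (- k))"
      using per int_vec_uminus[OF k(1)] unfolding periodic_def by metis
    then have "norm (gW (z - a) - gW (z' - b)) \<le> K * norm ((z - a) - ((z' - b) + (- k)))"
      using lip by metis
    also have "(z - a) - ((z' - b) + (- k)) = (z - z') - (a - b - k)" by (simp add: algebra_simps)
    also have "K * norm ((z - z') - (a - b - k)) \<le> K * (norm (z - z') + norm (a - b - k))"
      using K by (intro mult_left_mono norm_triangle_ineq4) auto
    finally have "norm (gW (z - a) - gW (z' - b)) / K \<le> norm (z - z') + m"
      using K k by (simp add: divide_simps mult.commute)
    then show "norm (gW (z - a) - gW (z' - b)) / K - norm (z - z') \<le> m" by simp
  qed
  then have "norm (gW (z - a) - gW (z' - b)) / K \<le> norm (z - z') + torus_dist a b" by simp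
  then show ?thesis using K by (simp add: divide_simps distrib_left mult.commute)
qed

lemma conv_lip_coupling:
  fixes gW :: "real^'n \<Rightarrow> real^'n"
  assumes pi: "\<pi> \<in> couplings \<mu> \<nu>"
    and cont: "continuous_on UNIV gW" and bnd: "\<And>x. norm (gW x) \<le> M"
    and per: "periodic gW" and lip: "\<And>u v. norm (gW u - gW v) \<le> K * norm (u - v)" and K: "K > 0"
  shows "norm (conv_grad gW \<mu> z - conv_grad gW \<nu> z') \<le> K * norm (z - z') + K * sqrt (\<integral>p. (torus_dist (fst p) (snd p))\<^sup>2 \<partial>\<pi>)"
proof -
  have ps: "prob_space \<pi>" and s: "sets \<pi> = sets (borel :: ((real^'n)\<times>(real^'n)) measure)"
    and d1: "distr \<pi> borel fst = \<mu>" and d2: "distr \<pi> borel snd = \<nu>"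
    using pi unfolding couplings_def by auto
  interpret prob_space \<pi> by (rule ps)
  have mc: "\<And>f::(real^'n)\<times>(real^'n) \<Rightarrow> 'b::{topological_space,second_countable_topology}.
     continuous_on UNIV f \<Longrightarrow> f \<in> measurable \<pi> borel"
    by (subst measurable_cong_sets[OF s refl]) (rule borel_measurable_continuous_onI)
  have mfst: "fst \<in> measurable \<pi> borel" by (rule mc) (intro continuous_intros)
  have msnd: "snd \<in> measurable \<pi> borel" by (rule mc) (intro continuous_intros)
  have cz: "continuous_on UNIV (\<lambda>a. gW (w - a))" for w
    by (rule continuous_on_compose2[OF cont]) (auto intro!: continuous_intros)
  have bm: "(\<lambda>a. gW (w - a)) \<in> borel_measurable borel" for w
    by (rule borel_measurable_continuous_onI[OF cz])
  have I1: "conv_grad gW \<mu> z = (\<integral>p. gW (z - fst p) \<partial>\<pi>)"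
    unfolding conv_grad_def d1[symmetric] by (rule integral_distr[OF mfst bm])
  have I2: "conv_grad gW \<nu> z' = (\<integral>p. gW (z' - snd p) \<partial>\<pi>)"
    unfolding conv_grad_def d2[symmetric] by (rule integral_distr[OF msnd bm])
  have int1: "integrable \<pi> (\<lambda>p. gW (z - fst p))"
    by (rule integrable_const_bound[where B=M]) (auto intro!: mc continuous_on_compose2[OF cont] continuous_intros simp: bnd)
  have int2: "integrable \<pi> (\<lambda>p. gW (z' - snd p))"
    by (rule integrable_const_bound[where B=M]) (auto intro!: mc continuous_on_compose2[OF cont] continuous_intros simp: bnd)
  obtain R where R: "\<And>x y::real^'n. torus_dist x y \<le> R" using td_bound by blast
  have mtd: "(\<lambda>p. torus_dist (fst p) (snd p)) \<in> borel_measurable \<pi>"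
    by (rule mc[OF td_cont])
  have inttd: "integrable \<pi> (\<lambda>p. torus_dist (fst p) (snd p))"
    by (rule integrable_const_bound[where B=R]) (auto simp: R td_nonneg mtd)
  have inttd2: "integrable \<pi> (\<lambda>p. (torus_dist (fst p) (snd p))\<^sup>2)"
  proof (rule integrable_const_bound[where B="R\<^sup>2"])
    show "AE x in \<pi>. norm ((torus_dist (fst x) (snd x))\<^sup>2) \<le> R\<^sup>2"
      by (intro AE_I2) (simp add: R td_nonneg power_mono)
  qed (use mtd in measurable)
  have intg: "integrable \<pi> (\<lambda>p. K * norm (z - z') + K * torus_dist (fst p) (snd p))"
    using inttd by auto
  have "conv_grad gW \<mu> z - conv_grad gW \<nu> z' = (\<integral>p. gW (z - fst p) - gW (z' - snd p) \<partial>\<pi>)"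
    unfolding I1 I2 by (rule Bochner_Integration.integral_diff[OF int1 int2, symmetric])
  then have "norm (conv_grad gW \<mu> z - conv_grad gW \<nu> z') \<le> (\<integral>p. K * norm (z - z') + K * torus_dist (fst p) (snd p) \<partial>\<pi>)"
    using Bochner_Integration.integral_norm_bound_integral[OF Bochner_Integration.integrable_diff[OF int1 int2] intg]
      pw_bound[OF per lip K] by simp
  also have "\<dots> = K * norm (z - z') + K * (\<integral>p. torus_dist (fst p) (snd p) \<partial>\<pi>)"
    using inttd by (simp add: prob_space)
  also have "\<dots> \<le> K * norm (z - z') + K * sqrt (\<integral>p. (torus_dist (fst p) (snd p))\<^sup>2 \<partial>\<pi>)"
    using mean_le_sqrt[OF ps inttd inttd2] K by simp
  finally show ?thesis .
qed

lemma conv_lip: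
  fixes gW :: "real^'n \<Rightarrow> real^'n"
  assumes m: "\<mu> \<in> prob_torus" and n: "\<nu> \<in> prob_torus"
    and cont: "continuous_on UNIV gW" and bnd: "\<And>x. norm (gW x) \<le> M"
    and per: "periodic gW" and lip: "\<And>u v. norm (gW u - gW v) \<le> K * norm (u - v)" and K: "K > 0"
  shows "norm (conv_grad gW \<mu> z - conv_grad gW \<nu> z') \<le> K * norm (z - z') + K * W2 \<mu> \<nu>"
proof -
  define S where "S = (\<lambda>\<pi>. \<integral>p. (torus_dist (fst p) (snd p))\<^sup>2 \<partial>\<pi>) ` couplings \<mu> \<nu>"
  have Sne: "S \<noteq> {}" unfolding S_def using couplings_nonempty[OF m n] by auto
  have S0: "\<And>s. s \<in> S \<Longrightarrow> 0 \<le> s" unfolding S_def by auto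
  have Q0: "0 \<le> Inf S" using Sne S0 by (intro cInf_greatest) auto
  have W: "W2 \<mu> \<nu> = sqrt (Inf S)" unfolding W2_def S_def ..
  show ?thesis
  proof (rule field_le_epsilon)
    fix e :: real assume e: "0 < e"
    define e1 where "e1 = e / K"
    have e1: "0 < e1" unfolding e1_def using e K by simp
    obtain s where s: "s \<in> S" "s < Inf S + e1\<^sup>2"
      using cInf_lessD[OF Sne, of "Inf S + e1\<^sup>2"] e1 by auto
    obtain \<pi> where pi: "\<pi> \<in> couplings \<mu> \<nu>" "s = (\<integral>p. (torus_dist (fst p) (snd p))\<^sup>2 \<partial>\<pi>)"
      using s(1) unfolding S_def by auto
    have "sqrt s \<le> sqrt (Inf S + e1\<^sup>2)" using s(2) by simp
    also have "\<dots> \<le> sqrt (Inf S) + sqrt (e1\<^sup>2)" using Q0 by (intro sqrt_add_le_add_sqrt) auto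
    also have "\<dots> = sqrt (Inf S) + e1" using e1 by simp
    finally have ss: "sqrt s \<le> sqrt (Inf S) + e1" .
    have "norm (conv_grad gW \<mu> z - conv_grad gW \<nu> z') \<le> K * norm (z - z') + K * sqrt s"
      using conv_lip_coupling[OF pi(1) cont bnd per lip K] pi(2) by simp
    also have "\<dots> \<le> K * norm (z - z') + K * (sqrt (Inf S) + e1)"
      using ss K by simp
    also have "\<dots> = K * norm (z - z') + K * W2 \<mu> \<nu> + e"
      unfolding W e1_def using K by (simp add: distrib_left)
    finally show "norm (conv_grad gW \<mu> z - conv_grad gW \<nu> z') \<le> K * norm (z - z') + K * W2 \<mu> \<nu> + e" .
  qed
qed


lemma cont_from_bound:
  fixes c :: "real \<Rightarrow> 'a::metric_space" and ga :: "real \<Rightarrow> 'b::metric_space" and gb :: "real \<Rightarrow> 'c::metric_space"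
  assumes ca: "continuous_on S ga" and cb: "continuous_on S gb"
    and b: "\<And>s s'. s \<in> S \<Longrightarrow> s' \<in> S \<Longrightarrow> dist (c s') (c s) \<le> dist (ga s') (ga s) + dist (gb s') (gb s)"
  shows "continuous_on S c"
  unfolding continuous_on_iff
proof (intro ballI allI impI)
  fix s e assume s: "s \<in> S" and e: "(0::real) < e"
  obtain d1 where d1: "d1 > 0" "\<forall>s'\<in>S. dist s' s < d1 \<longrightarrow> dist (ga s') (ga s) < e/2"
    using ca s e unfolding continuous_on_iff by (meson half_gt_zero)
  obtain d2 where d2: "d2 > 0" "\<forall>s'\<in>S. dist s' s < d2 \<longrightarrow> dist (gb s') (gb s) < e/2"
    using cb s e unfolding continuous_on_iff by (meson half_gt_zero)
  show "\<exists>d>0. \<forall>s'\<in>S. dist s' s < d \<longrightarrow> dist (c s') (c s) < e"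
  proof (intro exI[of _ "min d1 d2"] conjI ballI impI)
    fix s' assume s': "s' \<in> S" "dist s' s < min d1 d2"
    have "dist (c s') (c s) \<le> dist (ga s') (ga s) + dist (gb s') (gb s)" by (rule b[OF s s'(1)])
    also have "\<dots> < e/2 + e/2" using d1 d2 s' by (intro add_strict_mono) auto
    finally show "dist (c s') (c s) < e" by simp
  qed (use d1 d2 in auto)
qed

lemma conv_bound:
  fixes g :: "real^'n \<Rightarrow> real^'n"
  assumes m: "\<mu> \<in> prob_torus" and cont: "continuous_on UNIV g" and bnd: "\<And>x. norm (g x) \<le> M"
  shows "norm (conv_grad g \<mu> z) \<le> M"
proof -
  have ps: "prob_space \<mu>" and s: "sets \<mu> = sets borel" using m unfolding prob_torus_def by auto
  interpret prob_space \<mu> by (rule ps)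
  have meas: "(\<lambda>a. g (z - a)) \<in> borel_measurable \<mu>"
    by (subst measurable_cong_sets[OF s refl]) (auto intro!: borel_measurable_continuous_onI continuous_on_compose2[OF cont] continuous_intros)
  have int: "integrable \<mu> (\<lambda>a. g (z - a))"
    by (rule integrable_const_bound[where B=M]) (auto simp: bnd meas)
  have "norm (conv_grad g \<mu> z) \<le> (\<integral>a. M \<partial>\<mu>)"
    unfolding conv_grad_def
    by (rule Bochner_Integration.integral_norm_bound_integral[OF int]) (auto simp: bnd)
  also have "\<dots> = M" by (simp add: prob_space)
  finally show ?thesis .
qed

lemma sup_norm_ge:
  assumes "\<And>x. norm (U x) \<le> M"
  shows "norm (U x) \<le> sup_norm U"
  unfolding sup_norm_def by (rule cSup_upper) (use assms in \<open>auto intro!: bdd_aboveI\<close>)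

lemma grad_facts:
  fixes V :: "real^'n \<Rightarrow> real"
  assumes p: "periodic V" and c: "C21 V gV"
  shows "continuous_on UNIV gV" "periodic gV" "\<And>x. norm (gV x) \<le> sup_norm gV" "0 \<le> sup_norm gV"
proof -
  have dV: "\<And>x. (V has_derivative (\<lambda>v. gV x \<bullet> v)) (at x)" using c unfolding C21_def by blast
  obtain H where dH: "\<And>x. (gV has_derivative H x) (at x)" using c unfolding C21_def by blast
  show cont: "continuous_on UNIV gV"
    using dH has_derivative_continuous continuous_at_imp_continuous_on by blast
  show pg: "periodic gV" by (rule grad_periodic[OF p dV])
  obtain M where M: "\<And>x. norm (gV x) \<le> M" using periodic_bounded[OF pg cont] by blast
  show "\<And>x. norm (gV x) \<le> sup_norm gV" using sup_norm_ge[OF M] .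
  then show "0 \<le> sup_norm gV" by (meson norm_ge_zero order_trans)
qed


lemma cost_bound_k:
  fixes V W :: "real^'n \<Rightarrow> real" and gradV gradW :: "real^'n \<Rightarrow> real^'n"
    and \<rho> :: "real \<Rightarrow> (real^'n) measure"
    and x y k :: "real^'n" and t h :: real
  assumes pV: "periodic V" and pW: "periodic W"
    and cV: "C21 V gradV" and cW: "C21 W gradW"
    and gf: "granular_gradient_flow V W \<rho>"
    and t: "t > 0" and h: "h > 0" and k: "int_vec k"
  shows "cost gradV gradW \<rho> x y t h
           \<le> (norm (x - y - k) / (2 * sqrt h) + (1/2) * sqrt h * (sup_norm gradV + sup_norm gradW))\<^sup>2"
proof -
  note fV = grad_facts[OF pV cV]
  note fW = grad_facts[OF pW cW]
  obtain K where K: "K > 0" "\<And>u v. norm (gradW u - gradW v) \<le> K * norm (u - v)"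
    using grad_lipschitz[OF pW cW] by blast
  have prob: "\<And>s. s \<ge> 0 \<Longrightarrow> \<rho> s \<in> prob_torus"
    using gf unfolding granular_gradient_flow_def gradient_flow_def by auto
  obtain m :: "real \<Rightarrow> real" where mi: "\<And>a b. 0 < a \<Longrightarrow> m integrable_on {a..b}"
    and mW: "\<And>s s'. 0 < s \<Longrightarrow> s \<le> s' \<Longrightarrow> W2 (\<rho> s) (\<rho> s') \<le> integral {s..s'} m"
    using gf unfolding granular_gradient_flow_def gradient_flow_def loc_AC_curve_def by blast
  define v where "v = (1/h) *\<^sub>R (y + k - x)"
  define \<gamma> where "\<gamma> = (\<lambda>s. x + (s - t) *\<^sub>R v)"
  define c where "c = (\<lambda>s. conv_grad gradW (\<rho> s) (\<gamma> s))"
  define F where "F = (\<lambda>u. integral {t..u} m)"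
  define BV where "BV = sup_norm gradV"
  define BW where "BW = sup_norm gradW"
  have contF: "continuous_on {t..t+h} F" unfolding F_def
    by (rule indefinite_integral_continuous_1[OF mi[OF t]])
  have contg: "continuous_on {t..t+h} \<gamma>" unfolding \<gamma>_def by (intro continuous_intros)
  have cb: "dist (c s') (c s) \<le> K * norm (\<gamma> s' - \<gamma> s) + K * \<bar>F s' - F s\<bar>"
    if s: "s \<in> {t..t+h}" "s' \<in> {t..t+h}" for s s'
  proof -
    have ord: "dist (c a) (c b) \<le> K * norm (\<gamma> a - \<gamma> b) + K * \<bar>F a - F b\<bar>"
      if ab: "a \<in> {t..t+h}" "b \<in> {t..t+h}" "a \<le> b" for a b
    proof -
      have pa: "\<rho> a \<in> prob_torus" and pb: "\<rho> b \<in> prob_torus" using ab t prob by auto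
      have "W2 (\<rho> a) (\<rho> b) \<le> integral {a..b} m" using mW[of a b] ab t by auto
      also have "\<dots> = F b - F a"
        using Henstock_Kurzweil_Integration.integral_combine[where a=t and c=a and b=b and f=m] mi[OF t, of b] ab unfolding F_def by auto
      also have "\<dots> \<le> \<bar>F a - F b\<bar>" by simp
      finally have w: "W2 (\<rho> a) (\<rho> b) \<le> \<bar>F a - F b\<bar>" .
      have "dist (c a) (c b) \<le> K * norm (\<gamma> a - \<gamma> b) + K * W2 (\<rho> a) (\<rho> b)"
        unfolding c_def dist_norm
        by (rule conv_lip[OF pa pb fW(1) fW(3) fW(2) K(2) K(1)])
      also have "\<dots> \<le> K * norm (\<gamma> a - \<gamma> b) + K * \<bar>F a - F b\<bar>"
        using w K by simp
      finally show ?thesis .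
    qed
    show ?thesis
    proof (cases "s' \<le> s")
      case True then show ?thesis using ord[of s' s] s by auto
    next
      case False then show ?thesis using ord[of s s'] s
        by (simp add: dist_commute norm_minus_commute abs_minus_commute)
    qed
  qed
  have contc: "continuous_on {t..t+h} c"
  proof (rule cont_from_bound[where ga="\<lambda>s. K *\<^sub>R \<gamma> s" and gb="\<lambda>s. K * F s"])
    show "continuous_on {t..t+h} (\<lambda>s. K *\<^sub>R \<gamma> s)" using contg by (intro continuous_intros)
    show "continuous_on {t..t+h} (\<lambda>s. K * F s)" using contF by (intro continuous_intros)
    fix s s' assume "s \<in> {t..t+h}" "s' \<in> {t..t+h}"
    then have "dist (c s') (c s) \<le> K * norm (\<gamma> s' - \<gamma> s) + K * \<bar>F s' - F s\<bar>" by (rule cb)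
    also have "\<dots> = dist (K *\<^sub>R \<gamma> s') (K *\<^sub>R \<gamma> s) + dist (K * F s') (K * F s)"
      using K(1) by (simp add: dist_norm dist_real_def scaleR_diff_right[symmetric] abs_mult right_diff_distrib[symmetric])
    finally show "dist (c s') (c s) \<le> dist (K *\<^sub>R \<gamma> s') (K *\<^sub>R \<gamma> s) + dist (K * F s') (K * F s)" .
  qed
  define L where "L = (\<lambda>s. lagrangian gradV gradW \<rho> ((\<lambda>_. v) s) (\<gamma> s) s)"
  have Leq: "L = (\<lambda>s. (1/4) * (norm (v + gradV (\<gamma> s) + c s))\<^sup>2)"
    unfolding L_def lagrangian_def c_def by simp
  have cg: "continuous_on {t..t+h} (\<lambda>s. gradV (\<gamma> s))"
    by (rule continuous_on_compose2[OF fV(1) contg]) auto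
  have contL: "continuous_on {t..t+h} L"
    unfolding Leq by (intro continuous_intros cg contc)
  have intL: "L integrable_on {t..t+h}" by (rule integrable_continuous_interval[OF contL])
  define C where "C = (1/4) * (norm v + BV + BW)\<^sup>2"
  have Lb: "L s \<le> C" if s: "s \<in> {t..t+h}" for s
  proof -
    have "norm (c s) \<le> BW" unfolding c_def BW_def
      by (rule conv_bound[OF prob fW(1) fW(3)]) (use s t in auto)
    then have "norm (v + gradV (\<gamma> s) + c s) \<le> norm v + BV + BW"
      using fV(3)[of "\<gamma> s"] norm_triangle_ineq[of "v + gradV (\<gamma> s)" "c s"]
        norm_triangle_ineq[of v "gradV (\<gamma> s)"] unfolding BV_def by linarith
    then show ?thesis unfolding Leq C_def
      by (intro mult_left_mono power_mono) auto
  qed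
  have "integral {t..t+h} L \<le> integral {t..t+h} (\<lambda>_. C)"
    by (rule integral_le[OF intL]) (use Lb in auto)
  also have "\<dots> = h * C" using h by simp
  finally have intb: "integral {t..t+h} L \<le> h * C" .
  have AC: "AC2_curve t (t+h) \<gamma> (\<lambda>_. v)"
    unfolding AC2_curve_def
  proof (intro conjI ballI)
    show "(\<lambda>_. v) absolutely_integrable_on {t..t+h}" by simp
    show "(\<lambda>s. (norm v)\<^sup>2) integrable_on {t..t+h}" by (rule integrable_const_ivl)
    fix s assume "s \<in> {t..t+h}"
    then show "\<gamma> s = \<gamma> t + integral {t..s} (\<lambda>_. v)" unfolding \<gamma>_def by simp
  qed
  have end1: "int_vec (\<gamma> (t+h) - y)"
  proof -
    have "\<gamma> (t+h) - y = k" unfolding \<gamma>_def v_def using h by (simp add: algebra_simps)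
    then show ?thesis using k by simp
  qed
  have mem: "integral {t..t+h} L \<in> {integral {t..t+h} (\<lambda>s. lagrangian gradV gradW \<rho> (\<gamma>' s) (\<gamma>0 s) s) | \<gamma>0 \<gamma>'.
       AC2_curve t (t+h) \<gamma>0 \<gamma>' \<and> \<gamma>0 t = x \<and> int_vec (\<gamma>0 (t+h) - y) \<and>
       (\<lambda>s. lagrangian gradV gradW \<rho> (\<gamma>' s) (\<gamma>0 s) s) integrable_on {t..t+h}}"
  proof -
    have g0: "\<gamma> t = x" by (simp add: \<gamma>_def)
    show ?thesis unfolding L_def
      by (rule CollectI, rule exI[of _ \<gamma>], rule exI[of _ "\<lambda>_. v"]) (use AC end1 intL g0 in \<open>simp add: L_def\<close>)
  qed
  have "cost gradV gradW \<rho> x y t h \<le> integral {t..t+h} L"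
    unfolding cost_def
  proof (rule cInf_lower[OF mem])
    show "bdd_below {integral {t..t+h} (\<lambda>s. lagrangian gradV gradW \<rho> (\<gamma>' s) (\<gamma>0 s) s) | \<gamma>0 \<gamma>'.
       AC2_curve t (t+h) \<gamma>0 \<gamma>' \<and> \<gamma>0 t = x \<and> int_vec (\<gamma>0 (t+h) - y) \<and>
       (\<lambda>s. lagrangian gradV gradW \<rho> (\<gamma>' s) (\<gamma>0 s) s) integrable_on {t..t+h}}"
    proof (rule bdd_belowI[of _ 0])
      fix z assume "z \<in> {integral {t..t+h} (\<lambda>s. lagrangian gradV gradW \<rho> (\<gamma>' s) (\<gamma>0 s) s) | \<gamma>0 \<gamma>'.
       AC2_curve t (t+h) \<gamma>0 \<gamma>' \<and> \<gamma>0 t = x \<and> int_vec (\<gamma>0 (t+h) - y) \<and>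
       (\<lambda>s. lagrangian gradV gradW \<rho> (\<gamma>' s) (\<gamma>0 s) s) integrable_on {t..t+h}}"
      then obtain \<gamma>0 \<gamma>' where z: "z = integral {t..t+h} (\<lambda>s. lagrangian gradV gradW \<rho> (\<gamma>' s) (\<gamma>0 s) s)"
        "(\<lambda>s. lagrangian gradV gradW \<rho> (\<gamma>' s) (\<gamma>0 s) s) integrable_on {t..t+h}" by blast
      have "\<And>s. 0 \<le> lagrangian gradV gradW \<rho> (\<gamma>' s) (\<gamma>0 s) s" by (simp add: lagrangian_def)
      then show "0 \<le> z" unfolding z(1) by (intro Henstock_Kurzweil_Integration.integral_nonneg[OF z(2)])
    qed
  qed
  also have "\<dots> \<le> h * C" by (rule intb)
  also have "h * C = (norm (x - y - k) / (2 * sqrt h) + (1/2) * sqrt h * (BV + BW))\<^sup>2"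
  proof -
    have e: "y + k - x = -(x - y - k)" by (simp add: algebra_simps)
    have nv: "norm v = norm (x - y - k) / h"
      unfolding v_def e using h by (simp add: norm_minus_commute)
    define r where "r = sqrt h"
    have r: "r > 0" "h = r\<^sup>2" unfolding r_def using h by auto
    show ?thesis unfolding C_def nv r_def[symmetric] r(2)
      using r(1) by (simp add: field_simps power2_eq_square)
  qed
  finally show ?thesis unfolding BV_def BW_def .
qed


theorem mainTheorem9:
  fixes V W :: "real^'n \<Rightarrow> real" and gradV gradW :: "real^'n \<Rightarrow> real^'n"
    and \<rho> :: "real \<Rightarrow> (real^'n) measure"
    and x y :: "real^'n" and t h :: real
  assumes "periodic V" and "periodic W"
    and "C21 V gradV" and "C21 W gradW"
    and "granular_gradient_flow V W \<rho>"
    and "t > 0" and "h > 0"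
  shows "cost gradV gradW \<rho> x y t h
           \<le> (torus_dist x y / (2 * sqrt h) + (1/2) * sqrt h * (sup_norm gradV + sup_norm gradW))\<^sup>2"
proof -
  define B where "B = (1/2) * sqrt h * (sup_norm gradV + sup_norm gradW)"
  have B0: "0 \<le> B" unfolding B_def using grad_facts(4)[OF assms(1,3)] grad_facts(4)[OF assms(2,4)] assms(7) by simp
  define G where "G = (\<lambda>d. (d / (2 * sqrt h) + B)\<^sup>2)"
  have ev: "\<forall>\<^sub>F e in at_right 0. cost gradV gradW \<rho> x y t h \<le> G (torus_dist x y + e)"
    unfolding eventually_at_right_field
  proof (intro exI[of _ 1] conjI allI impI)
    fix e :: real assume e: "0 < e" "e < 1"
    obtain k where k: "int_vec k" "norm (x - y - k) < torus_dist x y + e" using td_approx[OF e(1)] by blast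
    have "cost gradV gradW \<rho> x y t h \<le> G (norm (x - y - k))"
      unfolding G_def B_def by (rule cost_bound_k[OF assms k(1)])
    also have "\<dots> \<le> G (torus_dist x y + e)"
      unfolding G_def using k(2) B0 assms(7)
      by (intro power_mono add_right_mono divide_right_mono) auto
    finally show "cost gradV gradW \<rho> x y t h \<le> G (torus_dist x y + e)" .
  qed simp
  have lim: "((\<lambda>e. G (torus_dist x y + e)) \<longlongrightarrow> G (torus_dist x y + 0)) (at_right 0)"
    unfolding G_def using assms(7) by (intro tendsto_intros) auto
  have "cost gradV gradW \<rho> x y t h \<le> G (torus_dist x y + 0)"
    by (rule tendsto_le[OF _ lim tendsto_const ev]) simp
  then show ?thesis unfolding G_def B_def by simp
qed

end
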